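(* Consider the setting described in the context, for a family $(f^{(D)})_{D\ge1}$ of $(\alpha,\beta)$-class functions. Given $\epsilon,\delta>0$, there exist $\Delta$ and $N$ with $$\Delta=\Omega\big(\epsilon^{1+\frac1\beta}\big),\qquad N=O\Big(\epsilon^{-\frac{1}{2\beta}}\log\big(\epsilon^{-1}\delta^{-1}\big)\Big)$$ such that the following algorithm returns a subnetwork $\hat f$ of $\mathcal{S}[w^\ast_\lambda]$ whose hidden layer has at most $N$ nodes and which, with probability greater than $1-\delta$, satisfies $\sum_{\mathbf{x}}\hat p_{\mathrm{data}}(\mathbf{x})|\mathcal{S}[w^\ast_\lambda](\mathbf{x})-\hat f(\mathbf{x})|^2=O(\epsilon)$. The algorithm: draw $N$ independent samples $(\mathbf{a},b)$ from $p^\ast_{\lambda,\Delta}$, let $\hat{\mathbb{W}}$ be the set of sampled parameters, and set $\hat f(\mathbf{x})=\sum_{(\mathbf{a},b)\in\hat{\mathbb{W}}}\hat w^\ast(\mathbf{a},b)g((\mathbf{a}^\top\mathbf{x}-b)\bmod P)$, where the weights $\hat w^\ast$ on the sampled nodes are trained by convex optimization on the $M$ examples.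
   Context: $P$ is a fixed prime, $\mathbb{Z}_P=\{0,\dots,P-1\}$ with arithmetic mod $P$. $g:\mathbb{Z}_P\to\mathbb{R}$ is an activation function with $\sum_bg(b)=0$, $\sum_b|g(b)|^2=1$. For $w:\mathbb{Z}_P^D\times\mathbb{Z}_P\to\mathbb{R}$, $\mathcal{S}[w](\mathbf{x})=P^{-D/2}\sum_{\mathbf{a}\in\mathbb{Z}_P^D,b\in\mathbb{Z}_P}w(\mathbf{a},b)g((\mathbf{a}^\top\mathbf{x}-b)\bmod P)$; the node with parameter $(\mathbf{a},b)$ has weight $w(\mathbf{a},b)$. For each $D$, $f=f^{(D)}$ is an unknown function, and we are given $M$ examples $(\mathbf{x}_m,f(\mathbf{x}_m))$, $\mathbf{x}_m\in\mathbb{Z}_P^D$, with empirical distribution $\hat p_{\mathrm{data}}$. For $\lambda>0$, $w^\ast_\lambda=\arg\min_w\{\sum_{\mathbf{x}}\hat p_{\mathrm{data}}(\mathbf{x})|f(\mathbf{x})-\mathcal{S}[w](\mathbf{x})|^2+\lambda\sum_{\mathbf{a},b}|P^{-D/2}w(\mathbf{a},b)|^2\}$. Order all $P^{D+1}$ parameters as $(\mathbf{a}_j,b_j)$, $j=1,\dots,P^{D+1}$, so that $|w^\ast_\lambda(\mathbf{a}_1,b_1)|\ge|w^\ast_\lambda(\mathbf{a}_2,b_2)|\ge\cdots$. The family is of $(\alpha,\beta)$-class: there are constants $\alpha,\beta>0$ such that for all $D$ and $j$, $|P^{-D/2}w^\ast_\lambda(\mathbf{a}_j,b_j)|\le\alpha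 j^{-(1+\beta)}$. For $\Delta>0$, $p^\ast_{\lambda,\Delta}(\mathbf{a},b)=\frac1Z\frac{|P^{-D/2}w^\ast_\lambda(\mathbf{a},b)|^2}{|P^{-D/2}w^\ast_\lambda(\mathbf{a},b)|^2+\Delta}$ with $Z$ the normalizing constant. The $O,\Omega$ constants may depend on $\alpha,\beta$ but not on $D$. *)

theory Defs
  imports Complex_Main "HOL-Computational_Algebra.Primes"
begin

text \<open>Z_P^D is represented by functions nat => nat with entries below P on the
first D coordinates and 0 elsewhere (canonical representatives).\<close>

definition vecs :: "nat \<Rightarrow> nat \<Rightarrow> (nat \<Rightarrow> nat) set" where
  "vecs P D = {x. (\<forall>i<D. x i < P) \<and> (\<forall>i\<ge>D. x i = 0)}"

definition params :: "nat \<Rightarrow> nat \<Rightarrow> ((nat \<Rightarrow> nat) \<times> nat) set" where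
  "params P D = vecs P D \<times> {..<P}"

definition node :: "nat \<Rightarrow> nat \<Rightarrow> (nat \<Rightarrow> real) \<Rightarrow> (nat \<Rightarrow> nat) \<Rightarrow> nat \<Rightarrow> (nat \<Rightarrow> nat) \<Rightarrow> real" where
  "node P D g a b x = g (nat ((int (\<Sum>i<D. a i * x i) - int b) mod int P))"

definition sw :: "nat \<Rightarrow> nat \<Rightarrow> ((nat \<Rightarrow> nat) \<times> nat \<Rightarrow> real) \<Rightarrow> (nat \<Rightarrow> nat) \<times> nat \<Rightarrow> real" where
  "sw P D w q = real P powr (- real D / 2) * w q"

definition netS :: "nat \<Rightarrow> nat \<Rightarrow> (nat \<Rightarrow> real) \<Rightarrow> ((nat \<Rightarrow> nat) \<times> nat \<Rightarrow> real) \<Rightarrow> (nat \<Rightarrow> nat) \<Rightarrow> real" where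
  "netS P D g w x = real P powr (- real D / 2) * (\<Sum>(a,b)\<in>params P D. w (a,b) * node P D g a b x)"

definition phat :: "(nat \<Rightarrow> nat) list \<Rightarrow> (nat \<Rightarrow> nat) \<Rightarrow> real" where
  "phat xs x = real (card {m. m < length xs \<and> xs ! m = x}) / real (length xs)"

definition objective :: "nat \<Rightarrow> nat \<Rightarrow> (nat \<Rightarrow> real) \<Rightarrow> real \<Rightarrow> (nat \<Rightarrow> nat) list \<Rightarrow> ((nat \<Rightarrow> nat) \<Rightarrow> real)
    \<Rightarrow> ((nat \<Rightarrow> nat) \<times> nat \<Rightarrow> real) \<Rightarrow> real" where
  "objective P D g lam xs f w =
     (\<Sum>x\<in>vecs P D. phat xs x * (f x - netS P D g w x)\<^sup>2)
     + lam * (\<Sum>q\<in>params P D. (sw P D w q)\<^sup>2)"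

definition is_wstar :: "nat \<Rightarrow> nat \<Rightarrow> (nat \<Rightarrow> real) \<Rightarrow> real \<Rightarrow> (nat \<Rightarrow> nat) list \<Rightarrow> ((nat \<Rightarrow> nat) \<Rightarrow> real)
    \<Rightarrow> ((nat \<Rightarrow> nat) \<times> nat \<Rightarrow> real) \<Rightarrow> bool" where
  "is_wstar P D g lam xs f w \<longleftrightarrow> (\<forall>w'. objective P D g lam xs f w \<le> objective P D g lam xs f w')"

definition ab_class :: "nat \<Rightarrow> nat \<Rightarrow> real \<Rightarrow> real \<Rightarrow> ((nat \<Rightarrow> nat) \<times> nat \<Rightarrow> real) \<Rightarrow> bool" where
  "ab_class P D \<alpha> \<beta> w \<longleftrightarrow>
     (\<exists>\<sigma>. bij_betw \<sigma> {1..card (params P D)} (params P D)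
        \<and> (\<forall>i\<in>{1..card (params P D)}. \<forall>j\<in>{1..card (params P D)}. i \<le> j \<longrightarrow> \<bar>w (\<sigma> j)\<bar> \<le> \<bar>w (\<sigma> i)\<bar>)
        \<and> (\<forall>j\<in>{1..card (params P D)}. \<bar>sw P D w (\<sigma> j)\<bar> \<le> \<alpha> * real j powr (-(1 + \<beta>))))"

text \<open>The sampling distribution p*_{lambda,Delta}. Convention: if the normalizing constant Z
is 0 (i.e. w* = 0) we use the uniform distribution on the parameters.\<close>
definition pstar :: "nat \<Rightarrow> nat \<Rightarrow> real \<Rightarrow> ((nat \<Rightarrow> nat) \<times> nat \<Rightarrow> real) \<Rightarrow> (nat \<Rightarrow> nat) \<times> nat \<Rightarrow> real" where
  "pstar P D \<Delta> w q =
     (let c = (\<lambda>r. (sw P D w r)\<^sup>2 / ((sw P D w r)\<^sup>2 + \<Delta>));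
          Z = (\<Sum>r\<in>params P D. c r)
      in if Z = 0 then 1 / real (card (params P D)) else c q / Z)"

definition subnet :: "nat \<Rightarrow> nat \<Rightarrow> (nat \<Rightarrow> real) \<Rightarrow> ((nat \<Rightarrow> nat) \<times> nat) set
    \<Rightarrow> ((nat \<Rightarrow> nat) \<times> nat \<Rightarrow> real) \<Rightarrow> (nat \<Rightarrow> nat) \<Rightarrow> real" where
  "subnet P D g W v x = (\<Sum>(a,b)\<in>W. v (a,b) * node P D g a b x)"

definition sub_objective :: "nat \<Rightarrow> nat \<Rightarrow> (nat \<Rightarrow> real) \<Rightarrow> real \<Rightarrow> (nat \<Rightarrow> nat) list \<Rightarrow> ((nat \<Rightarrow> nat) \<Rightarrow> real)
    \<Rightarrow> ((nat \<Rightarrow> nat) \<times> nat) set \<Rightarrow> ((nat \<Rightarrow> nat) \<times> nat \<Rightarrow> real) \<Rightarrow> real" where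
  "sub_objective P D g lam xs f W v =
     (\<Sum>x\<in>vecs P D. phat xs x * (f x - subnet P D g W v x)\<^sup>2)
     + lam * (\<Sum>q\<in>W. (v q)\<^sup>2)"

definition is_trained :: "nat \<Rightarrow> nat \<Rightarrow> (nat \<Rightarrow> real) \<Rightarrow> real \<Rightarrow> (nat \<Rightarrow> nat) list \<Rightarrow> ((nat \<Rightarrow> nat) \<Rightarrow> real)
    \<Rightarrow> ((nat \<Rightarrow> nat) \<times> nat) set \<Rightarrow> ((nat \<Rightarrow> nat) \<times> nat \<Rightarrow> real) \<Rightarrow> bool" where
  "is_trained P D g lam xs f W v \<longleftrightarrow>
     (\<forall>v'. sub_objective P D g lam xs f W v \<le> sub_objective P D g lam xs f W v')"

text \<open>Probability that the set of N i.i.d. samples from p*_{lambda,Delta} satisfies E.\<close>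
definition sample_prob :: "nat \<Rightarrow> nat \<Rightarrow> real \<Rightarrow> ((nat \<Rightarrow> nat) \<times> nat \<Rightarrow> real) \<Rightarrow> nat
    \<Rightarrow> (((nat \<Rightarrow> nat) \<times> nat) set \<Rightarrow> bool) \<Rightarrow> real" where
  "sample_prob P D \<Delta> w N E =
     (\<Sum>ss\<in>{ss. set ss \<subseteq> params P D \<and> length ss = N}.
        prod_list (map (pstar P D \<Delta> w) ss) * (if E (set ss) then 1 else 0))"

end

theory Submission
  imports Defs
begin


lemma sum_lists_prod:
  assumes "finite A"
  shows "(\<Sum>ss\<in>{ss. set ss \<subseteq> A \<and> length ss = n}. prod_list (map p ss)) = (\<Sum>a\<in>A. p a :: real) ^ n"
proof (induction n)
  case 0
  have "{ss. set ss \<subseteq> A \<and> length ss = 0} = {[]}" by auto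
  then show ?case by simp
next
  case (Suc n)
  have "(\<Sum>ss\<in>{ss. set ss \<subseteq> A \<and> length ss = Suc n}. prod_list (map p ss))
      = (\<Sum>x\<in>{ss. set ss \<subseteq> A \<and> length ss = n} \<times> A. prod_list (map p ((\<lambda>(xs, n). n#xs) x)))"
    unfolding lists_length_Suc_eq
    by (subst sum.reindex) (auto simp: inj_on_def)
  also have "\<dots> = (\<Sum>xs\<in>{ss. set ss \<subseteq> A \<and> length ss = n}. \<Sum>a\<in>A. p a * prod_list (map p xs))"
    by (simp add: sum.cartesian_product split_def)
  also have "\<dots> = (\<Sum>xs\<in>{ss. set ss \<subseteq> A \<and> length ss = n}. (\<Sum>a\<in>A. p a) * prod_list (map p xs))"
    by (simp add: sum_distrib_right)
  also have "\<dots> = (\<Sum>a\<in>A. p a) * (\<Sum>a\<in>A. p a) ^ n"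
    using Suc by (simp add: sum_distrib_left[symmetric])
  finally show ?case by simp
qed

definition Jq :: "'x set \<Rightarrow> 'q set \<Rightarrow> ('q \<Rightarrow> 'x \<Rightarrow> real) \<Rightarrow> ('x \<Rightarrow> real) \<Rightarrow> ('x \<Rightarrow> real) \<Rightarrow> real \<Rightarrow> ('q \<Rightarrow> real) \<Rightarrow> real" where
  "Jq V Q Nd ph f lam z = (\<Sum>x\<in>V. ph x * (f x - (\<Sum>q\<in>Q. z q * Nd q x))\<^sup>2) + lam * (\<Sum>q\<in>Q. (z q)\<^sup>2)"

definition Qq :: "'x set \<Rightarrow> 'q set \<Rightarrow> ('q \<Rightarrow> 'x \<Rightarrow> real) \<Rightarrow> ('x \<Rightarrow> real) \<Rightarrow> real \<Rightarrow> ('q \<Rightarrow> real) \<Rightarrow> real" where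
  "Qq V Q Nd ph lam d = (\<Sum>x\<in>V. ph x * (\<Sum>q\<in>Q. d q * Nd q x)\<^sup>2) + lam * (\<Sum>q\<in>Q. (d q)\<^sup>2)"

lemma Jq_expand:
  "Jq V Q Nd ph f lam (\<lambda>q. u q + s * d q) = Jq V Q Nd ph f lam u
     + 2 * s * ((\<Sum>x\<in>V. - ph x * (f x - (\<Sum>q\<in>Q. u q * Nd q x)) * (\<Sum>q\<in>Q. d q * Nd q x)) + lam * (\<Sum>q\<in>Q. u q * d q))
     + s\<^sup>2 * Qq V Q Nd ph lam d"
proof -
  have e1: "(\<Sum>q\<in>Q. (u q + s * d q) * Nd q x) = (\<Sum>q\<in>Q. u q * Nd q x) + s * (\<Sum>q\<in>Q. d q * Nd q x)" for x
    by (simp add: algebra_simps sum.distrib sum_distrib_left)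
  have e2: "(\<Sum>q\<in>Q. (u q + s * d q)\<^sup>2) = (\<Sum>q\<in>Q. (u q)\<^sup>2) + 2 * s * (\<Sum>q\<in>Q. u q * d q) + s\<^sup>2 * (\<Sum>q\<in>Q. (d q)\<^sup>2)"
    by (simp add: power2_eq_square algebra_simps sum.distrib sum_distrib_left)
  have e3: "ph x * (f x - ((\<Sum>q\<in>Q. u q * Nd q x) + s * (\<Sum>q\<in>Q. d q * Nd q x)))\<^sup>2
     = ph x * (f x - (\<Sum>q\<in>Q. u q * Nd q x))\<^sup>2 + 2 * s * (- ph x * (f x - (\<Sum>q\<in>Q. u q * Nd q x)) * (\<Sum>q\<in>Q. d q * Nd q x))
       + s\<^sup>2 * (ph x * (\<Sum>q\<in>Q. d q * Nd q x)\<^sup>2)" for x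
    by (simp add: power2_eq_square algebra_simps)
  have e4: "(\<Sum>x\<in>V. ph x * (f x - ((\<Sum>q\<in>Q. u q * Nd q x) + s * (\<Sum>q\<in>Q. d q * Nd q x)))\<^sup>2)
     = (\<Sum>x\<in>V. ph x * (f x - (\<Sum>q\<in>Q. u q * Nd q x))\<^sup>2) + 2 * s * (\<Sum>x\<in>V. - ph x * (f x - (\<Sum>q\<in>Q. u q * Nd q x)) * (\<Sum>q\<in>Q. d q * Nd q x))
       + s\<^sup>2 * (\<Sum>x\<in>V. ph x * (\<Sum>q\<in>Q. d q * Nd q x)\<^sup>2)"
    unfolding e3 by (simp only: sum.distrib sum_distrib_left)
  show ?thesis
    unfolding Jq_def Qq_def e1 e2 e4
    by (simp add: algebra_simps)
qed

lemma Jq_min: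
  assumes min: "\<And>z. Jq V Q Nd ph f lam u \<le> Jq V Q Nd ph f lam z"
    and Qnn: "Qq V Q Nd ph lam d \<ge> 0"
  shows "Jq V Q Nd ph f lam (\<lambda>q. u q + d q) = Jq V Q Nd ph f lam u + Qq V Q Nd ph lam d"
proof -
  define L where "L = (\<Sum>x\<in>V. - ph x * (f x - (\<Sum>q\<in>Q. u q * Nd q x)) * (\<Sum>q\<in>Q. d q * Nd q x)) + lam * (\<Sum>q\<in>Q. u q * d q)"
  define Qd where "Qd = Qq V Q Nd ph lam d"
  have ex: "Jq V Q Nd ph f lam (\<lambda>q. u q + s * d q) = Jq V Q Nd ph f lam u + 2 * s * L + s\<^sup>2 * Qd" for s
    unfolding L_def Qd_def by (rule Jq_expand)
  have L0: "L = 0"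
  proof (rule ccontr)
    assume "L \<noteq> 0"
    define s where "s = - L / (Qd + 1)"
    have pos: "Qd + 1 > 0" using Qnn Qd_def by simp
    have "0 \<le> 2 * s * L + s\<^sup>2 * Qd" using min[of "\<lambda>q. u q + s * d q"] ex[of s] by simp
    also have "2 * s * L + s\<^sup>2 * Qd = L\<^sup>2 * (- 2 * (Qd + 1) + Qd) / (Qd + 1)\<^sup>2"
      using pos unfolding s_def power2_eq_square
      by (simp add: divide_simps) (simp add: algebra_simps)
    also have "\<dots> < 0"
      using pos \<open>L \<noteq> 0\<close> Qnn Qd_def by (intro divide_neg_pos mult_pos_neg) auto
    finally show False by simp
  qed
  show ?thesis using ex[of 1] L0 Qd_def by simp
qed

lemma Qq_nonneg: "(\<And>x. x \<in> V \<Longrightarrow> ph x \<ge> 0) \<Longrightarrow> lam \<ge> 0 \<Longrightarrow> Qq V Q Nd ph lam d \<ge> 0"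
  unfolding Qq_def by (intro add_nonneg_nonneg sum_nonneg mult_nonneg_nonneg zero_le_power2) auto

lemma sum_sq_le_sq_sum:
  fixes d :: "'q \<Rightarrow> real"
  assumes "finite Q"
  shows "(\<Sum>q\<in>Q. (d q)\<^sup>2) \<le> (\<Sum>q\<in>Q. \<bar>d q\<bar>)\<^sup>2"
proof -
  have "(\<Sum>q\<in>Q. (d q)\<^sup>2) \<le> (\<Sum>q\<in>Q. \<bar>d q\<bar> * (\<Sum>r\<in>Q. \<bar>d r\<bar>))"
  proof (rule sum_mono)
    fix q assume "q \<in> Q"
    then have "\<bar>d q\<bar> \<le> (\<Sum>r\<in>Q. \<bar>d r\<bar>)"
      using assms by (intro member_le_sum) auto
    then show "(d q)\<^sup>2 \<le> \<bar>d q\<bar> * (\<Sum>r\<in>Q. \<bar>d r\<bar>)"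
    proof -
      have "(d q)\<^sup>2 = \<bar>d q\<bar> * \<bar>d q\<bar>" by (simp add: power2_eq_square)
      also have "\<dots> \<le> \<bar>d q\<bar> * (\<Sum>r\<in>Q. \<bar>d r\<bar>)" by (rule mult_left_mono) (use \<open>\<bar>d q\<bar> \<le> _\<close> in auto)
      finally show ?thesis .
    qed
  qed
  also have "\<dots> = (\<Sum>q\<in>Q. \<bar>d q\<bar>)\<^sup>2"
    by (simp add: power2_eq_square sum_distrib_right)
  finally show ?thesis .
qed

lemma err_bound:
  fixes u vt :: "'q \<Rightarrow> real"
  assumes fV: "finite V" and fQ: "finite Q" and WQ: "W \<subseteq> Q"
    and ph0: "\<And>x. x \<in> V \<Longrightarrow> ph x \<ge> 0" and ph1: "(\<Sum>x\<in>V. ph x) \<le> 1"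
    and Nd1: "\<And>q x. q \<in> Q \<Longrightarrow> x \<in> V \<Longrightarrow> \<bar>Nd q x\<bar> \<le> 1"
    and lam: "lam \<ge> 0"
    and minu: "\<And>z. Jq V Q Nd ph f lam u \<le> Jq V Q Nd ph f lam z"
    and tr: "Jq V Q Nd ph f lam vt \<le> Jq V Q Nd ph f lam (\<lambda>q. if q \<in> W then u q else 0)"
  shows "(\<Sum>x\<in>V. ph x * ((\<Sum>q\<in>Q. u q * Nd q x) - (\<Sum>q\<in>Q. vt q * Nd q x))\<^sup>2)
      \<le> (1 + lam) * (\<Sum>q\<in>Q - W. \<bar>u q\<bar>)\<^sup>2"
proof -
  let ?J = "Jq V Q Nd ph f lam"
  let ?Q = "Qq V Q Nd ph lam"
  define d1 where "d1 = (\<lambda>q. vt q - u q)"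
  define d2 where "d2 = (\<lambda>q. (if q \<in> W then u q else 0) - u q)"
  define T where "T = (\<Sum>q\<in>Q - W. \<bar>u q\<bar>)"
  have a1: "?J vt = ?J u + ?Q d1"
    using Jq_min[OF minu Qq_nonneg[OF ph0 lam], of d1] by (simp add: d1_def)
  have a2: "?J (\<lambda>q. if q \<in> W then u q else 0) = ?J u + ?Q d2"
    using Jq_min[OF minu Qq_nonneg[OF ph0 lam], of d2] by (simp add: d2_def)
  have q12: "?Q d1 \<le> ?Q d2" using tr a1 a2 by simp
  have "(\<Sum>x\<in>V. ph x * ((\<Sum>q\<in>Q. u q * Nd q x) - (\<Sum>q\<in>Q. vt q * Nd q x))\<^sup>2)
      = (\<Sum>x\<in>V. ph x * (\<Sum>q\<in>Q. d1 q * Nd q x)\<^sup>2)"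
  proof (rule sum.cong)
    fix x
    have "(\<Sum>q\<in>Q. u q * Nd q x) - (\<Sum>q\<in>Q. vt q * Nd q x) = - (\<Sum>q\<in>Q. d1 q * Nd q x)"
      by (simp add: d1_def algebra_simps sum_subtractf)
    then show "ph x * ((\<Sum>q\<in>Q. u q * Nd q x) - (\<Sum>q\<in>Q. vt q * Nd q x))\<^sup>2 = ph x * (\<Sum>q\<in>Q. d1 q * Nd q x)\<^sup>2"
      by simp
  qed simp
  also have "\<dots> \<le> ?Q d1"
    unfolding Qq_def using lam by (simp add: sum_nonneg)
  also have "\<dots> \<le> ?Q d2" by (rule q12)
  also have "\<dots> \<le> (1 + lam) * T\<^sup>2"
  proof -
    have sd: "(\<Sum>q\<in>Q. \<bar>d2 q\<bar>) = T"
    proof -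
      have "(\<Sum>q\<in>Q. \<bar>d2 q\<bar>) = (\<Sum>q\<in>Q. if q \<in> Q - W then \<bar>u q\<bar> else 0)"
        by (rule sum.cong) (auto simp: d2_def)
      also have "\<dots> = T" unfolding T_def using fQ
        by (simp add: sum.If_cases Int_absorb1 Diff_eq Compl_eq)
      finally show ?thesis .
    qed
    have "\<bar>\<Sum>q\<in>Q. d2 q * Nd q x\<bar> \<le> T" if "x \<in> V" for x
    proof -
      have "\<bar>\<Sum>q\<in>Q. d2 q * Nd q x\<bar> \<le> (\<Sum>q\<in>Q. \<bar>d2 q * Nd q x\<bar>)" by (rule sum_abs)
      also have "\<dots> \<le> (\<Sum>q\<in>Q. \<bar>d2 q\<bar>)"
        using Nd1 that by (intro sum_mono) (simp add: abs_mult mult_left_le)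
      finally show ?thesis using sd by simp
    qed
    note Tb = this
    have "(\<Sum>q\<in>Q. d2 q * Nd q x)\<^sup>2 \<le> T\<^sup>2" if "x \<in> V" for x
    proof -
      have "\<bar>\<Sum>q\<in>Q. d2 q * Nd q x\<bar>\<^sup>2 \<le> T\<^sup>2" by (rule power_mono[OF Tb[OF that] abs_ge_zero])
      then show ?thesis by simp
    qed
    then have "(\<Sum>x\<in>V. ph x * (\<Sum>q\<in>Q. d2 q * Nd q x)\<^sup>2) \<le> (\<Sum>x\<in>V. ph x * T\<^sup>2)"
      using ph0 by (intro sum_mono mult_left_mono) auto
    also have "\<dots> = (\<Sum>x\<in>V. ph x) * T\<^sup>2" by (simp add: sum_distrib_right)
    also have "\<dots> \<le> T\<^sup>2" using ph1 ph0 by (intro mult_left_le_one_le) (auto intro: sum_nonneg)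
    finally have b1: "(\<Sum>x\<in>V. ph x * (\<Sum>q\<in>Q. d2 q * Nd q x)\<^sup>2) \<le> T\<^sup>2" .
    have b2: "lam * (\<Sum>q\<in>Q. (d2 q)\<^sup>2) \<le> lam * T\<^sup>2"
      using sum_sq_le_sq_sum[OF fQ, of d2] sd lam by (simp add: mult_left_mono)
    show ?thesis unfolding Qq_def using b1 b2 by (simp add: algebra_simps)
  qed
  finally show ?thesis unfolding T_def .
qed



lemma bern_powr:
  fixes x b :: real
  assumes "0 \<le> x" "x < 1" "b > 0"
  shows "1 + b * x \<le> (1 - x) powr (- b)"
proof -
  have "ln (1 - x) \<le> - x" using ln_le_minus_one[of "1 - x"] assms by simp
  then have "b * x \<le> b * (- ln (1 - x))" using assms by (intro mult_left_mono) auto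
  then have "b * x \<le> - b * ln (1 - x)" by simp
  then have "1 + b * x \<le> exp (- b * ln (1 - x))"
    using exp_ge_add_one_self[of "b * x"] exp_le_cancel_iff order_trans by blast
  also have "\<dots> = (1 - x) powr (- b)" using assms by (simp add: powr_def)
  finally show ?thesis .
qed

lemma tele_step:
  fixes b :: real and j :: nat
  assumes "b > 0" "j \<ge> 2"
  shows "real j powr (-(1 + b)) \<le> (real (j - 1) powr (- b) - real j powr (- b)) / b"
proof -
  have j0: "real j > 0" using assms by simp
  have "real (j - 1) = real j - 1" using assms by (simp add: of_nat_diff)
  also have "\<dots> = real j * (1 - 1 / real j)" using j0 by (simp add: right_diff_distrib)
  finally have jj: "real (j - 1) = real j * (1 - 1 / real j)" .
  have "real (j - 1) powr (- b) = real j powr (- b) * (1 - 1 / real j) powr (- b)"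
    unfolding jj using j0 assms by (auto intro!: powr_mult)
  also have "\<dots> \<ge> real j powr (- b) * (1 + b * (1 / real j))"
    using bern_powr[of "1 / real j" b] assms j0 by (intro mult_left_mono) auto
  finally have h: "real j powr (- b) * (1 + b * (1 / real j)) \<le> real (j - 1) powr (- b)" .
  have "real j powr (-(1 + b)) = real j powr (- b) / real j"
  proof -
    have "real j powr (-(1 + b)) = real j powr (- b) * real j powr (-1)"
      using powr_add[of "real j" "-b" "-1"] by (simp add: add.commute)
    also have "real j powr (-1) = 1 / real j" using j0 by (simp add: powr_minus divide_inverse)
    finally show ?thesis by simp
  qed
  then have "b * real j powr (-(1 + b)) = real j powr (- b) * (1 + b * (1 / real j)) - real j powr (- b)"
    by (simp add: algebra_simps)
  then have "b * real j powr (-(1 + b)) \<le> real (j - 1) powr (- b) - real j powr (- b)"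
    using h by linarith
  then show ?thesis using assms by (simp add: field_simps)
qed

lemma tail_sum_aux:
  fixes b :: real
  assumes "b > 0" "K \<ge> 1" "n \<ge> K"
  shows "(\<Sum>j\<in>{K<..n}. real j powr (-(1 + b))) \<le> (real K powr (- b) - real n powr (- b)) / b"
  using assms(3)
proof (induction n rule: dec_induct)
  case base
  then show ?case by simp
next
  case (step m)
  have "{K<..Suc m} = insert (Suc m) {K<..m}" using step.hyps by auto
  then have "(\<Sum>j\<in>{K<..Suc m}. real j powr (-(1 + b))) = real (Suc m) powr (-(1 + b)) + (\<Sum>j\<in>{K<..m}. real j powr (-(1 + b)))"
    by simp
  also have "\<dots> \<le> (real m powr (- b) - real (Suc m) powr (- b)) / b + (real K powr (- b) - real m powr (- b)) / b"
    using tele_step[of b "Suc m"] assms step by (intro add_mono) auto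
  also have "\<dots> = (real K powr (- b) - real (Suc m) powr (- b)) / b"
    by (simp add: diff_divide_distrib)
  finally show ?case .
qed

lemma tail_sum:
  fixes b :: real
  assumes "b > 0" "K \<ge> 1"
  shows "(\<Sum>j\<in>{K<..n}. real j powr (-(1 + b))) \<le> real K powr (- b) / b"
proof (cases "n \<ge> K")
  case True
  have "(real K powr (- b) - real n powr (- b)) / b \<le> real K powr (- b) / b"
    using assms by (simp add: divide_right_mono)
  then show ?thesis using tail_sum_aux[OF assms True] by linarith
next
  case False
  then have "{K<..n} = {}" by auto
  then show ?thesis using assms by simp
qed



lemma sigma_sum:
  fixes h :: "'q \<Rightarrow> real" and \<sigma> :: "nat \<Rightarrow> 'q" and \<alpha> \<beta> A B :: real
  assumes bij: "bij_betw \<sigma> {1..n} Q"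
    and hb: "\<And>j. j \<in> {1..n} \<Longrightarrow> h (\<sigma> j) \<le> (if j \<le> K then A else B * (\<alpha> * real j powr (-(1 + \<beta>))))"
    and A0: "A \<ge> 0" and B0: "B \<ge> 0" and a0: "\<alpha> \<ge> 0" and b0: "\<beta> > 0" and K1: "K \<ge> 1"
  shows "(\<Sum>q\<in>Q. h q) \<le> real K * A + B * (\<alpha> * (real K powr (- \<beta>) / \<beta>))"
proof -
  have "(\<Sum>q\<in>Q. h q) = (\<Sum>j\<in>{1..n}. h (\<sigma> j))"
    using sum.reindex_bij_betw[OF bij, of h] by simp
  also have "\<dots> \<le> (\<Sum>j\<in>{1..n}. (if j \<le> K then A else B * (\<alpha> * real j powr (-(1 + \<beta>)))))"
    by (rule sum_mono) (rule hb)
  also have "\<dots> = (\<Sum>j\<in>{1..n} \<inter> {j. j \<le> K}. A) + (\<Sum>j\<in>{1..n} \<inter> - {j. j \<le> K}. B * (\<alpha> * real j powr (-(1 + \<beta>))))"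
    by (rule sum.If_cases) simp
  also have "{1..n} \<inter> - {j. j \<le> K} = {K<..n}" using K1 by auto
  also have "(\<Sum>j\<in>{1..n} \<inter> {j. j \<le> K}. A) \<le> real K * A"
  proof -
    have "card ({1..n} \<inter> {j. j \<le> K}) \<le> card {1..K}"
      by (rule card_mono) auto
    then have "real (card ({1..n} \<inter> {j. j \<le> K})) \<le> real K" by simp
    then show ?thesis using A0 by (simp add: mult_right_mono)
  qed
  also have "(\<Sum>j\<in>{K<..n}. B * (\<alpha> * real j powr (-(1 + \<beta>)))) = B * (\<alpha> * (\<Sum>j\<in>{K<..n}. real j powr (-(1 + \<beta>))))"
    by (simp add: sum_distrib_left)
  also have "\<dots> \<le> B * (\<alpha> * (real K powr (- \<beta>) / \<beta>))"
    using tail_sum[OF b0 K1, of n] a0 B0 by (intro mult_left_mono) auto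
  finally show ?thesis by simp
qed

lemma prob_lower:
  fixes p :: "'q \<Rightarrow> real"
  assumes fQ: "finite Q" and p0: "\<And>q. q \<in> Q \<Longrightarrow> p q \<ge> 0" and p1: "(\<Sum>q\<in>Q. p q) = 1"
    and SQ: "S \<subseteq> Q" and ES: "\<And>ss. set ss \<subseteq> Q \<Longrightarrow> length ss = N \<Longrightarrow> S \<subseteq> set ss \<Longrightarrow> E (set ss)"
  shows "(\<Sum>ss\<in>{ss. set ss \<subseteq> Q \<and> length ss = N}. prod_list (map p ss) * (if E (set ss) then 1 else 0))
     \<ge> 1 - (\<Sum>q\<in>S. (1 - p q) ^ N)"
proof -
  let ?L = "{ss. set ss \<subseteq> Q \<and> length ss = N}"
  have fL: "finite ?L" using finite_lists_length_eq[OF fQ] .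
  have fS: "finite S" using SQ fQ finite_subset by blast
  have pr0: "prod_list (map p ss) \<ge> 0" if "ss \<in> ?L" for ss
    using that p0 by (intro prod_list_nonneg) auto
  have ind: "(if E (set ss) then 1 else 0) \<ge> 1 - (\<Sum>q\<in>S. if q \<notin> set ss then 1 else (0::real))" if ssL: "ss \<in> ?L" for ss
  proof (cases "S \<subseteq> set ss")
    case True
    then show ?thesis using ES ssL by (simp add: sum_nonneg)
  next
    case False
    then obtain q where q: "q \<in> S" "q \<notin> set ss" by blast
    have "1 \<le> (\<Sum>q\<in>S. if q \<notin> set ss then 1 else (0::real))"
    proof -
      have "(if q \<notin> set ss then 1 else (0::real)) \<le> (\<Sum>q\<in>S. if q \<notin> set ss then 1 else (0::real))"
        using q fS by (intro member_le_sum) auto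
      then show ?thesis using q by simp
    qed
    then show ?thesis by simp
  qed
  have miss: "(\<Sum>ss\<in>?L. prod_list (map p ss) * (if q \<notin> set ss then 1 else 0)) = (1 - p q) ^ N"
    if "q \<in> S" for q
  proof -
    have "(\<Sum>ss\<in>?L. prod_list (map p ss) * (if q \<notin> set ss then 1 else 0))
        = (\<Sum>ss\<in>{ss. set ss \<subseteq> Q - {q} \<and> length ss = N}. prod_list (map p ss))"
    proof -
      have "(\<Sum>ss\<in>?L. prod_list (map p ss) * (if q \<notin> set ss then 1 else 0))
          = (\<Sum>ss\<in>?L \<inter> {ss. q \<notin> set ss}. prod_list (map p ss))"
        using fL by (simp add: sum.inter_restrict) (rule sum.cong, auto)
      also have "?L \<inter> {ss. q \<notin> set ss} = {ss. set ss \<subseteq> Q - {q} \<and> length ss = N}" by auto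
      finally show ?thesis .
    qed
    also have "\<dots> = (\<Sum>r\<in>Q - {q}. p r) ^ N"
      using fQ by (intro sum_lists_prod) auto
    also have "(\<Sum>r\<in>Q - {q}. p r) = 1 - p q"
      using p1 fQ that SQ by (auto simp add: sum_diff1)
    finally show ?thesis .
  qed
  have "(\<Sum>ss\<in>?L. prod_list (map p ss) * (if E (set ss) then 1 else 0))
      \<ge> (\<Sum>ss\<in>?L. prod_list (map p ss) * (1 - (\<Sum>q\<in>S. if q \<notin> set ss then 1 else (0::real))))"
    using pr0 ind by (intro sum_mono mult_left_mono) auto
  moreover have "(\<Sum>ss\<in>?L. prod_list (map p ss) * (1 - (\<Sum>q\<in>S. if q \<notin> set ss then 1 else (0::real))))
      = (\<Sum>ss\<in>?L. prod_list (map p ss)) - (\<Sum>q\<in>S. \<Sum>ss\<in>?L. prod_list (map p ss) * (if q \<notin> set ss then 1 else 0))"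
    by (simp add: right_diff_distrib sum_subtractf sum_distrib_left sum.swap[of _ S])
  moreover have "(\<Sum>ss\<in>?L. prod_list (map p ss)) = 1"
    using sum_lists_prod[OF fQ, where n=N and p=p] p1 by simp
  moreover have "(\<Sum>q\<in>S. \<Sum>ss\<in>?L. prod_list (map p ss) * (if q \<notin> set ss then 1 else 0)) = (\<Sum>q\<in>S. (1 - p q) ^ N)"
    using miss by (rule sum.cong[OF refl])
  ultimately show ?thesis by simp
qed



lemma finite_vecs: "finite (vecs P D)"
proof -
  have "vecs P D \<subseteq> (\<lambda>l i. if i < D then l ! i else 0) ` {l. set l \<subseteq> {..<P} \<and> length l = D}"
  proof
    fix x assume x: "x \<in> vecs P D"
    have x1: "\<And>i. i < D \<Longrightarrow> x i < P" and x2: "\<And>i. i \<ge> D \<Longrightarrow> x i = 0"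
      using x unfolding vecs_def by auto
    show "x \<in> (\<lambda>l i. if i < D then l ! i else 0) ` {l. set l \<subseteq> {..<P} \<and> length l = D}"
    proof (rule image_eqI[of _ _ "map x [0..<D]"])
      show "x = (\<lambda>i. if i < D then map x [0..<D] ! i else 0)"
      proof
        fix i show "x i = (if i < D then map x [0..<D] ! i else 0)"
          using x2[of i] by (cases "i < D") auto
      qed
      show "map x [0..<D] \<in> {l. set l \<subseteq> {..<P} \<and> length l = D}"
        using x1 by auto
    qed
  qed
  moreover have "finite {l. set l \<subseteq> {..<P} \<and> length l = D}"
    by (rule finite_lists_length_eq) simp
  ultimately show ?thesis by (rule finite_subset[OF _ finite_imageI])
qed
lemma finite_params: "finite (params P D)"
  unfolding params_def using finite_vecs by simp

lemma params_ne: "P > 0 \<Longrightarrow> ((\<lambda>_. 0), 0) \<in> params P D"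
  unfolding params_def vecs_def by simp

lemma phat_nonneg: "phat xs x \<ge> 0"
  unfolding phat_def by simp

lemma phat_sum: "finite V \<Longrightarrow> (\<Sum>x\<in>V. phat xs x) \<le> 1"
proof -
  assume fV: "finite V"
  have "(\<Sum>x\<in>V. card {m. m < length xs \<and> xs ! m = x}) = card (\<Union>x\<in>V. {m. m < length xs \<and> xs ! m = x})"
    using fV by (subst card_UN_disjoint) auto
  also have "\<dots> \<le> card {..<length xs}" by (rule card_mono) auto
  finally have h: "(\<Sum>x\<in>V. real (card {m. m < length xs \<and> xs ! m = x})) \<le> real (length xs)"
    by (simp flip: of_nat_sum)
  show ?thesis
  proof (cases "length xs = 0")
    case True then show ?thesis by (simp add: phat_def)
  next
    case False
    have "(\<Sum>x\<in>V. phat xs x) = (\<Sum>x\<in>V. real (card {m. m < length xs \<and> xs ! m = x})) / real (length xs)"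
      unfolding phat_def by (simp add: sum_divide_distrib)
    also have "\<dots> \<le> 1" using h False by simp
    finally show ?thesis .
  qed
qed

lemma g_bound:
  fixes P b :: nat
  assumes "(\<Sum>b<P. (g b)\<^sup>2) = (1::real)" "b < P"
  shows "\<bar>g b\<bar> \<le> 1"
proof -
  have "(g b)\<^sup>2 \<le> (\<Sum>b<P. (g b)\<^sup>2)" using assms by (intro member_le_sum) (auto simp del: sum.lessThan_Suc)
  then have "(g b)\<^sup>2 \<le> 1\<^sup>2" using assms by simp
  then show ?thesis using abs_le_square_iff[of "g b" 1] by simp
qed

lemma node_bound:
  assumes "(\<Sum>b<P. (g b)\<^sup>2) = (1::real)" "P > 0"
  shows "\<bar>node P D g a b x\<bar> \<le> 1"
proof -
  have "nat ((int (\<Sum>i<D. a i * x i) - int b) mod int P) < P"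
    using assms(2) by (simp add: nat_less_iff)
  then show ?thesis unfolding node_def by (rule g_bound[OF assms(1)])
qed

definition NdF :: "nat \<Rightarrow> nat \<Rightarrow> (nat \<Rightarrow> real) \<Rightarrow> (nat \<Rightarrow> nat) \<times> nat \<Rightarrow> (nat \<Rightarrow> nat) \<Rightarrow> real" where
  "NdF P D g q x = node P D g (fst q) (snd q) x"

lemma netS_eq: "netS P D g w x = (\<Sum>q\<in>params P D. sw P D w q * NdF P D g q x)"
  unfolding netS_def sw_def NdF_def
  by (simp add: sum_distrib_left split_def mult.assoc)

lemma objective_eq: "objective P D g lam xs f w = Jq (vecs P D) (params P D) (NdF P D g) (phat xs) f lam (sw P D w)"
  unfolding objective_def Jq_def netS_eq ..

lemma sw_inv:
  assumes "P > 0"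
  shows "sw P D (\<lambda>q. real P powr (real D / 2) * z q) = z"
proof
  fix q
  have "real P powr (- real D / 2) * real P powr (real D / 2) = 1"
    using assms by (simp add: powr_add[symmetric])
  then show "sw P D (\<lambda>q. real P powr (real D / 2) * z q) q = z q"
    unfolding sw_def by (simp add: mult.assoc[symmetric])
qed

lemma sum_restrict_W:
  assumes "finite Q" "W \<subseteq> Q"
  shows "(\<Sum>q\<in>W. h q) = (\<Sum>q\<in>Q. if q \<in> W then h q else (0::real))"
  using assms by (simp add: sum.If_cases Int_absorb1)

lemma subnet_eq:
  assumes "W \<subseteq> params P D"
  shows "subnet P D g W v x = (\<Sum>q\<in>params P D. (if q \<in> W then v q else 0) * NdF P D g q x)"
proof -
  have "subnet P D g W v x = (\<Sum>q\<in>W. v q * NdF P D g q x)"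
    unfolding subnet_def NdF_def by (simp add: split_def)
  also have "\<dots> = (\<Sum>q\<in>params P D. if q \<in> W then v q * NdF P D g q x else 0)"
    by (rule sum_restrict_W[OF finite_params assms])
  finally show ?thesis by (rule trans) (rule sum.cong, auto)
qed

lemma sub_objective_eq:
  assumes "W \<subseteq> params P D"
  shows "sub_objective P D g lam xs f W v = Jq (vecs P D) (params P D) (NdF P D g) (phat xs) f lam (\<lambda>q. if q \<in> W then v q else 0)"
proof -
  have "(\<Sum>q\<in>W. (v q)\<^sup>2) = (\<Sum>q\<in>params P D. (if q \<in> W then v q else 0)\<^sup>2)"
    using sum_restrict_W[OF finite_params assms, of "\<lambda>q. (v q)\<^sup>2"] by (simp add: if_distrib cong: if_cong) (rule sum.cong, auto)
  then show ?thesis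
    unfolding sub_objective_def Jq_def subnet_eq[OF assms] by simp
qed



lemma pstar_facts:
  assumes P0: "P > 0" and Dl: "\<Delta> > 0"
  shows "\<And>q. pstar P D \<Delta> w q \<ge> 0" and "(\<Sum>q\<in>params P D. pstar P D \<Delta> w q) = 1"
proof -
  define c where "c = (\<lambda>r. (sw P D w r)\<^sup>2 / ((sw P D w r)\<^sup>2 + \<Delta>))"
  define Z where "Z = (\<Sum>r\<in>params P D. c r)"
  have c0: "c r \<ge> 0" for r unfolding c_def using Dl by (simp add: add_nonneg_pos less_imp_le)
  have Z0: "Z \<ge> 0" unfolding Z_def using c0 by (simp add: sum_nonneg)
  have ps: "pstar P D \<Delta> w q = (if Z = 0 then 1 / real (card (params P D)) else c q / Z)" for q
    unfolding pstar_def c_def Z_def Let_def by simp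
  show "pstar P D \<Delta> w q \<ge> 0" for q unfolding ps using c0 Z0 by simp
  have cp: "card (params P D) > 0"
    using params_ne[OF P0] finite_params card_gt_0_iff by blast
  show "(\<Sum>q\<in>params P D. pstar P D \<Delta> w q) = 1"
  proof (cases "Z = 0")
    case True then show ?thesis unfolding ps using cp by simp
  next
    case False
    then have "(\<Sum>q\<in>params P D. pstar P D \<Delta> w q) = (\<Sum>q\<in>params P D. c q) / Z"
      unfolding ps by (simp add: sum_divide_distrib)
    then show ?thesis using False Z_def by simp
  qed
qed

lemma core:
  fixes P D :: nat and g :: "nat \<Rightarrow> real" and lam \<Delta> bound :: real and N :: nat
  assumes P0: "P > 0" and g2: "(\<Sum>b<P. (g b)\<^sup>2) = 1" and lam: "lam > 0" and Dl: "\<Delta> > 0"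
    and wst: "is_wstar P D g lam xs f w"
    and SQ: "S \<subseteq> params P D"
    and bnd: "\<And>W. W \<subseteq> params P D \<Longrightarrow> S \<subseteq> W \<Longrightarrow> (1 + lam) * (\<Sum>q\<in>params P D - W. \<bar>sw P D w q\<bar>)\<^sup>2 \<le> bound"
  shows "sample_prob P D \<Delta> w N
          (\<lambda>W. card W \<le> N \<and>
             (\<forall>v. is_trained P D g lam xs f W v \<longrightarrow>
                (\<Sum>x\<in>vecs P D. phat xs x * (netS P D g w x - subnet P D g W v x)\<^sup>2) \<le> bound))
       \<ge> 1 - (\<Sum>q\<in>S. (1 - pstar P D \<Delta> w q) ^ N)"
  unfolding sample_prob_def
proof (rule prob_lower[OF finite_params pstar_facts(1)[OF P0 Dl] pstar_facts(2)[OF P0 Dl] SQ])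
  let ?J = "Jq (vecs P D) (params P D) (NdF P D g) (phat xs) f lam"
  let ?u = "sw P D w"
  have minu: "?J ?u \<le> ?J z" for z
  proof -
    have "objective P D g lam xs f w \<le> objective P D g lam xs f (\<lambda>q. real P powr (real D / 2) * z q)"
      using wst unfolding is_wstar_def by blast
    then show ?thesis unfolding objective_eq sw_inv[OF P0] .
  qed
  fix ss assume ssQ: "set ss \<subseteq> params P D" and len: "length ss = N" and Sss: "S \<subseteq> set ss"
  let ?W = "set ss"
  show "card ?W \<le> N \<and>
             (\<forall>v. is_trained P D g lam xs f ?W v \<longrightarrow>
                (\<Sum>x\<in>vecs P D. phat xs x * (netS P D g w x - subnet P D g ?W v x)\<^sup>2) \<le> bound)"
  proof (intro conjI allI impI)
    show "card ?W \<le> N" using card_length[of ss] len by simp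
    fix v assume tr: "is_trained P D g lam xs f ?W v"
    let ?vt = "\<lambda>q. if q \<in> ?W then v q else 0"
    have "sub_objective P D g lam xs f ?W v \<le> sub_objective P D g lam xs f ?W ?u"
      using tr unfolding is_trained_def by blast
    then have trJ: "?J ?vt \<le> ?J (\<lambda>q. if q \<in> ?W then ?u q else 0)"
      unfolding sub_objective_eq[OF ssQ] .
    have "(\<Sum>x\<in>vecs P D. phat xs x * (netS P D g w x - subnet P D g ?W v x)\<^sup>2)
        = (\<Sum>x\<in>vecs P D. phat xs x * ((\<Sum>q\<in>params P D. ?u q * NdF P D g q x) - (\<Sum>q\<in>params P D. ?vt q * NdF P D g q x))\<^sup>2)"
      unfolding netS_eq subnet_eq[OF ssQ] ..
    also have "\<dots> \<le> (1 + lam) * (\<Sum>q\<in>params P D - ?W. \<bar>?u q\<bar>)\<^sup>2"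
    proof (rule err_bound[OF finite_vecs finite_params ssQ phat_nonneg phat_sum[OF finite_vecs]])
      show "\<And>q x. q \<in> params P D \<Longrightarrow> x \<in> vecs P D \<Longrightarrow> \<bar>NdF P D g q x\<bar> \<le> 1"
        unfolding NdF_def using node_bound[OF g2 P0] by blast
    qed (use lam minu trJ in auto)
    also have "\<dots> \<le> bound" by (rule bnd[OF ssQ Sss])
    finally show "(\<Sum>x\<in>vecs P D. phat xs x * (netS P D g w x - subnet P D g ?W v x)\<^sup>2) \<le> bound" .
  qed
qed



lemma powr_K_step:
  fixes K :: nat and b :: real
  assumes "K \<ge> 1"
  shows "real K * real K powr (-(1 + b)) = real K powr (- b)"
proof -
  have K0: "real K > 0" using assms by simp
  have "real K powr (-(1 + b)) = real K powr (- b) * real K powr (-1)"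
    using powr_add[of "real K" "-b" "-1"] by (simp add: add.commute)
  also have "real K powr (-1) = 1 / real K" using K0 by (simp add: powr_minus divide_inverse)
  finally show ?thesis using K0 by simp
qed

lemma c_le_ratio:
  fixes u t :: real
  assumes "t > 0"
  shows "u\<^sup>2 / (u\<^sup>2 + t\<^sup>2) \<le> \<bar>u\<bar> / t" and "u\<^sup>2 / (u\<^sup>2 + t\<^sup>2) \<le> 1"
proof -
  have d: "u\<^sup>2 + t\<^sup>2 > 0" using assms by (simp add: add_nonneg_pos)
  show c1: "u\<^sup>2 / (u\<^sup>2 + t\<^sup>2) \<le> 1" using d by simp
  show "u\<^sup>2 / (u\<^sup>2 + t\<^sup>2) \<le> \<bar>u\<bar> / t"
  proof (cases "\<bar>u\<bar> \<ge> t")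
    case True
    then have "1 \<le> \<bar>u\<bar> / t" using assms by simp
    then show ?thesis using c1 by linarith
  next
    case False
    have "u\<^sup>2 / (u\<^sup>2 + t\<^sup>2) \<le> u\<^sup>2 / t\<^sup>2"
      using assms by (intro divide_left_mono) (auto simp: add_nonneg_pos)
    also have "\<dots> = (\<bar>u\<bar> / t) * (\<bar>u\<bar> / t)" by (simp add: power2_eq_square)
    also have "\<dots> \<le> (\<bar>u\<bar> / t) * 1"
      using False assms by (intro mult_left_mono) auto
    finally show ?thesis by simp
  qed
qed

lemma kbounds:
  fixes u :: "'q \<Rightarrow> real" and \<sigma> :: "nat \<Rightarrow> 'q" and \<alpha> \<beta> :: real and K :: nat
  assumes bij: "bij_betw \<sigma> {1..n} Q"
    and ab: "\<And>j. j \<in> {1..n} \<Longrightarrow> \<bar>u (\<sigma> j)\<bar> \<le> \<alpha> * real j powr (-(1 + \<beta>))"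
    and a0: "\<alpha> > 0" and b0: "\<beta> > 0" and K1: "K \<ge> 1"
  defines "t \<equiv> \<alpha> * real K powr (-(1 + \<beta>))"
  defines "S \<equiv> {q\<in>Q. \<bar>u q\<bar> \<ge> t}"
  shows "card S \<le> K"
    and "(\<Sum>q\<in>Q - S. \<bar>u q\<bar>) \<le> \<alpha> * (1 + 1 / \<beta>) * real K powr (- \<beta>)"
    and "(\<Sum>q\<in>Q. (u q)\<^sup>2 / ((u q)\<^sup>2 + t\<^sup>2)) \<le> real K * (1 + 1 / \<beta>)"
proof -
  have fQ: "finite Q" using bij bij_betw_finite by blast
  have t0: "t > 0" unfolding t_def using a0 K1 by simp
  have Kt: "real K * t = \<alpha> * real K powr (- \<beta>)"
    unfolding t_def using powr_K_step[OF K1, of \<beta>] by (simp add: algebra_simps)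
  show "card S \<le> K"
  proof -
    have "S \<subseteq> \<sigma> ` ({1..n} \<inter> {..K})"
    proof
      fix q assume q: "q \<in> S"
      then have "q \<in> Q" unfolding S_def by simp
      then obtain j where j: "j \<in> {1..n}" "q = \<sigma> j"
        using bij unfolding bij_betw_def by auto
      have "j \<le> K"
      proof (rule ccontr)
        assume "\<not> j \<le> K"
        then have "real j powr (-(1 + \<beta>)) < real K powr (-(1 + \<beta>))"
          using K1 b0 by (intro powr_less_mono2_neg) auto
        then have "\<alpha> * real j powr (-(1 + \<beta>)) < t" unfolding t_def using a0 by simp
        moreover have "t \<le> \<bar>u q\<bar>" using q unfolding S_def by simp
        ultimately show False using ab[OF j(1)] j(2) by simp
      qed
      then show "q \<in> \<sigma> ` ({1..n} \<inter> {..K})" using j by auto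
    qed
    then have "card S \<le> card (\<sigma> ` ({1..n} \<inter> {..K}))" by (intro card_mono) auto
    also have "\<dots> \<le> card ({1..n} \<inter> {..K})" by (rule card_image_le) simp
    also have "\<dots> \<le> card {1..K}" by (rule card_mono) auto
    finally show ?thesis by simp
  qed
  show "(\<Sum>q\<in>Q - S. \<bar>u q\<bar>) \<le> \<alpha> * (1 + 1 / \<beta>) * real K powr (- \<beta>)"
  proof -
    let ?h = "\<lambda>q. if \<bar>u q\<bar> < t then \<bar>u q\<bar> else 0"
    have "(\<Sum>q\<in>Q - S. \<bar>u q\<bar>) = (\<Sum>q\<in>Q. if q \<in> Q - S then \<bar>u q\<bar> else 0)"
      by (rule sum_restrict_W[OF fQ]) auto
    also have "\<dots> = (\<Sum>q\<in>Q. ?h q)"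
      by (rule sum.cong) (auto simp: S_def)
    also have "\<dots> \<le> real K * t + 1 * (\<alpha> * (real K powr (- \<beta>) / \<beta>))"
    proof (rule sigma_sum[OF bij _ _ _ _ b0 K1])
      fix j assume j: "j \<in> {1..n}"
      show "?h (\<sigma> j) \<le> (if j \<le> K then t else 1 * (\<alpha> * real j powr (-(1 + \<beta>))))"
        using ab[OF j] t0 by auto
    qed (use t0 a0 in auto)
    also have "\<dots> = \<alpha> * (1 + 1 / \<beta>) * real K powr (- \<beta>)"
      unfolding Kt by (simp add: algebra_simps)
    finally show ?thesis .
  qed
  show "(\<Sum>q\<in>Q. (u q)\<^sup>2 / ((u q)\<^sup>2 + t\<^sup>2)) \<le> real K * (1 + 1 / \<beta>)"
  proof -
    have "(\<Sum>q\<in>Q. (u q)\<^sup>2 / ((u q)\<^sup>2 + t\<^sup>2)) \<le> real K * 1 + (1 / t) * (\<alpha> * (real K powr (- \<beta>) / \<beta>))"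
    proof (rule sigma_sum[OF bij _ _ _ _ b0 K1])
      fix j assume j: "j \<in> {1..n}"
      have "(u (\<sigma> j))\<^sup>2 / ((u (\<sigma> j))\<^sup>2 + t\<^sup>2) \<le> \<bar>u (\<sigma> j)\<bar> / t" by (rule c_le_ratio(1)[OF t0])
      also have "\<dots> \<le> (\<alpha> * real j powr (-(1 + \<beta>))) / t"
        using ab[OF j] t0 by (simp add: divide_right_mono)
      finally have "(u (\<sigma> j))\<^sup>2 / ((u (\<sigma> j))\<^sup>2 + t\<^sup>2) \<le> 1 / t * (\<alpha> * real j powr (-(1 + \<beta>)))" by simp
      then show "(u (\<sigma> j))\<^sup>2 / ((u (\<sigma> j))\<^sup>2 + t\<^sup>2) \<le> (if j \<le> K then 1 else 1 / t * (\<alpha> * real j powr (-(1 + \<beta>))))"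
        using c_le_ratio(2)[OF t0] by simp
    qed (use t0 a0 in auto)
    also have "(1 / t) * (\<alpha> * (real K powr (- \<beta>) / \<beta>)) = real K / \<beta>"
    proof -
      have "(1 / t) * (\<alpha> * (real K powr (- \<beta>) / \<beta>)) = (real K * t) / t / \<beta>" unfolding Kt by simp
      also have "\<dots> = real K / \<beta>" using t0 by simp
      finally show ?thesis .
    qed
    finally show ?thesis by (simp add: algebra_simps)
  qed
qed



abbreviation evt where
  "evt P D g lam xs f w N B \<equiv> (\<lambda>W. card W \<le> N \<and>
     (\<forall>v. is_trained P D g lam xs f W v \<longrightarrow>
        (\<Sum>x\<in>vecs P D. phat xs x * (netS P D g w x - subnet P D g W v x)\<^sup>2) \<le> B))"

lemma mainD:
  fixes P D :: nat and g :: "nat \<Rightarrow> real" and lam \<alpha> \<beta> B :: real and K N :: nat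
  assumes P0: "P > 0" and g2: "(\<Sum>b<P. (g b)\<^sup>2) = 1" and lam: "lam > 0"
    and a0: "\<alpha> > 0" and b0: "\<beta> > 0"
    and wst: "is_wstar P D g lam xs f w" and abc: "ab_class P D \<alpha> \<beta> w"
    and K1: "K \<ge> 1"
    and Bb: "(1 + lam) * (\<alpha> * (1 + 1 / \<beta>) * real K powr (- \<beta>))\<^sup>2 \<le> B"
  shows "sample_prob P D ((\<alpha> * real K powr (-(1 + \<beta>)))\<^sup>2) w N (evt P D g lam xs f w N B)
     \<ge> 1 - real K * exp (- real N / (2 * real K * (1 + 1 / \<beta>)))"
proof -
  let ?Q = "params P D"
  let ?u = "sw P D w"
  define t where "t = \<alpha> * real K powr (-(1 + \<beta>))"
  define S where "S = {q\<in>?Q. \<bar>?u q\<bar> \<ge> t}"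
  define pm where "pm = 1 / (2 * real K * (1 + 1 / \<beta>))"
  obtain \<sigma> where bij: "bij_betw \<sigma> {1..card ?Q} ?Q"
    and ab: "\<And>j. j \<in> {1..card ?Q} \<Longrightarrow> \<bar>?u (\<sigma> j)\<bar> \<le> \<alpha> * real j powr (-(1 + \<beta>))"
    using abc unfolding ab_class_def by blast
  note kb = kbounds[OF bij ab a0 b0 K1, folded t_def, folded S_def]
  have t0: "t > 0" unfolding t_def using a0 K1 by simp
  have Dl: "t\<^sup>2 > 0" using t0 by simp
  have SQ: "S \<subseteq> ?Q" unfolding S_def by auto
  have core1: "sample_prob P D (t\<^sup>2) w N (evt P D g lam xs f w N B) \<ge> 1 - (\<Sum>q\<in>S. (1 - pstar P D (t\<^sup>2) w q) ^ N)"
  proof (rule core[OF P0 g2 lam Dl wst SQ])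
    fix W assume WQ: "W \<subseteq> ?Q" and SW: "S \<subseteq> W"
    have "(\<Sum>q\<in>?Q - W. \<bar>?u q\<bar>) \<le> (\<Sum>q\<in>?Q - S. \<bar>?u q\<bar>)"
      using SW finite_params by (intro sum_mono2) auto
    also have "\<dots> \<le> \<alpha> * (1 + 1 / \<beta>) * real K powr (- \<beta>)" by (rule kb(2))
    finally have "(\<Sum>q\<in>?Q - W. \<bar>?u q\<bar>)\<^sup>2 \<le> (\<alpha> * (1 + 1 / \<beta>) * real K powr (- \<beta>))\<^sup>2"
      by (intro power_mono) (auto intro: sum_nonneg)
    then have "(1 + lam) * (\<Sum>q\<in>?Q - W. \<bar>?u q\<bar>)\<^sup>2 \<le> (1 + lam) * (\<alpha> * (1 + 1 / \<beta>) * real K powr (- \<beta>))\<^sup>2"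
      using lam by (intro mult_left_mono) auto
    then show "(1 + lam) * (\<Sum>q\<in>?Q - W. \<bar>?u q\<bar>)\<^sup>2 \<le> B" using Bb by linarith
  qed
  have each: "(1 - pstar P D (t\<^sup>2) w q) ^ N \<le> exp (- real N / (2 * real K * (1 + 1 / \<beta>)))" if qS: "q \<in> S" for q
  proof -
    define c where "c = (\<lambda>r. (?u r)\<^sup>2 / ((?u r)\<^sup>2 + t\<^sup>2))"
    define Z where "Z = (\<Sum>r\<in>?Q. c r)"
    have c0: "c r \<ge> 0" for r unfolding c_def by simp
    have cq: "c q \<ge> 1 / 2"
    proof -
      have "t \<le> \<bar>?u q\<bar>" using qS S_def by simp
      then have "t\<^sup>2 \<le> \<bar>?u q\<bar>\<^sup>2" using t0 by (intro power_mono) auto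
      then have h: "t\<^sup>2 \<le> (?u q)\<^sup>2" by simp
      have d: "(?u q)\<^sup>2 + t\<^sup>2 > 0" using Dl by (simp add: add_nonneg_pos)
      have "1 / 2 \<le> (?u q)\<^sup>2 / ((?u q)\<^sup>2 + t\<^sup>2)"
        using h d by (simp add: divide_simps)
      then show ?thesis unfolding c_def .
    qed
    have qQ: "q \<in> ?Q" using qS SQ by auto
    have cZ: "c q \<le> Z" unfolding Z_def using c0 qQ finite_params by (intro member_le_sum) auto
    have Z0: "Z > 0" using cZ cq by simp
    have ZK: "Z \<le> real K * (1 + 1 / \<beta>)" unfolding Z_def c_def by (rule kb(3))
    have ps: "pstar P D (t\<^sup>2) w q = c q / Z"
    proof -
      have "pstar P D (t\<^sup>2) w q = (if Z = 0 then 1 / real (card ?Q) else c q / Z)"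
        unfolding pstar_def Let_def c_def Z_def by (rule refl)
      then show ?thesis using Z0 by simp
    qed
    have pmle: "pm \<le> c q / Z"
    proof -
      have "pm = (1 / 2) / (real K * (1 + 1 / \<beta>))" unfolding pm_def by simp
      also have "\<dots> \<le> c q / (real K * (1 + 1 / \<beta>))"
        using cq K1 b0 by (intro divide_right_mono) (auto intro: mult_pos_pos add_pos_pos)
      also have "\<dots> \<le> c q / Z" using Z0 ZK c0 by (intro divide_left_mono) auto
      finally show ?thesis .
    qed
    have p1: "c q / Z \<le> 1" using Z0 cZ by simp
    have "(1 - pstar P D (t\<^sup>2) w q) ^ N \<le> (exp (- pm)) ^ N"
    proof (rule power_mono)
      show "1 - pstar P D (t\<^sup>2) w q \<le> exp (- pm)"
        unfolding ps using pmle exp_ge_add_one_self[of "- pm"] by linarith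
      show "0 \<le> 1 - pstar P D (t\<^sup>2) w q" unfolding ps using p1 by simp
    qed
    also have "(exp (- pm)) ^ N = exp (- real N / (2 * real K * (1 + 1 / \<beta>)))"
      unfolding pm_def by (simp add: exp_of_nat_mult[symmetric])
    finally show ?thesis .
  qed
  have "(\<Sum>q\<in>S. (1 - pstar P D (t\<^sup>2) w q) ^ N) \<le> (\<Sum>q\<in>S. exp (- real N / (2 * real K * (1 + 1 / \<beta>))))"
    using each by (rule sum_mono)
  also have "\<dots> = real (card S) * exp (- real N / (2 * real K * (1 + 1 / \<beta>)))" by simp
  also have "\<dots> \<le> real K * exp (- real N / (2 * real K * (1 + 1 / \<beta>)))"
    using kb(1) by (intro mult_right_mono) auto
  finally show ?thesis using core1 unfolding t_def by linarith
qed

lemma allD: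
  fixes P D :: nat and g :: "nat \<Rightarrow> real" and lam \<alpha> \<beta> B \<Delta> :: real and N :: nat
  assumes P0: "P > 0" and g2: "(\<Sum>b<P. (g b)\<^sup>2) = 1" and lam: "lam > 0"
    and a0: "\<alpha> > 0" and b0: "\<beta> > 0" and Dl: "\<Delta> > 0"
    and wst: "is_wstar P D g lam xs f w" and abc: "ab_class P D \<alpha> \<beta> w"
    and Bb: "(1 + lam) * (\<alpha> * (1 + 1 / \<beta>))\<^sup>2 \<le> B"
  shows "sample_prob P D \<Delta> w N (evt P D g lam xs f w N B) \<ge> 1"
proof -
  let ?Q = "params P D"
  let ?u = "sw P D w"
  obtain \<sigma> where bij: "bij_betw \<sigma> {1..card ?Q} ?Q"
    and ab: "\<And>j. j \<in> {1..card ?Q} \<Longrightarrow> \<bar>?u (\<sigma> j)\<bar> \<le> \<alpha> * real j powr (-(1 + \<beta>))"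
    using abc unfolding ab_class_def by blast
  have tot: "(\<Sum>q\<in>?Q. \<bar>?u q\<bar>) \<le> \<alpha> * (1 + 1 / \<beta>)"
  proof -
    have "(\<Sum>q\<in>?Q. \<bar>?u q\<bar>) \<le> real 1 * \<alpha> + 1 * (\<alpha> * (real 1 powr (- \<beta>) / \<beta>))"
    proof (rule sigma_sum[OF bij _ _ _ _ b0])
      fix j assume j: "j \<in> {1..card ?Q}"
      show "\<bar>?u (\<sigma> j)\<bar> \<le> (if j \<le> 1 then \<alpha> else 1 * (\<alpha> * real j powr (-(1 + \<beta>))))"
        using ab[OF j] j by auto
    qed (use a0 in auto)
    then show ?thesis by (simp add: algebra_simps)
  qed
  have "sample_prob P D \<Delta> w N (evt P D g lam xs f w N B) \<ge> 1 - (\<Sum>q\<in>{}. (1 - pstar P D \<Delta> w q) ^ N)"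
  proof (rule core[OF P0 g2 lam Dl wst])
    fix W assume WQ: "W \<subseteq> ?Q"
    have "(\<Sum>q\<in>?Q - W. \<bar>?u q\<bar>) \<le> (\<Sum>q\<in>?Q. \<bar>?u q\<bar>)"
      using finite_params by (intro sum_mono2) auto
    also note tot
    finally have "(\<Sum>q\<in>?Q - W. \<bar>?u q\<bar>)\<^sup>2 \<le> (\<alpha> * (1 + 1 / \<beta>))\<^sup>2"
      by (intro power_mono) (auto intro: sum_nonneg)
    then have "(1 + lam) * (\<Sum>q\<in>?Q - W. \<bar>?u q\<bar>)\<^sup>2 \<le> (1 + lam) * (\<alpha> * (1 + 1 / \<beta>))\<^sup>2"
      using lam by (intro mult_left_mono) auto
    then show "(1 + lam) * (\<Sum>q\<in>?Q - W. \<bar>?u q\<bar>)\<^sup>2 \<le> B" using Bb by linarith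
  qed auto
  then show ?thesis by simp
qed



lemma eK_facts:
  fixes \<epsilon> \<beta> :: real
  assumes e0: "0 < \<epsilon>" "\<epsilon> < 1" and b0: "\<beta> > 0"
  defines "e \<equiv> \<epsilon> powr (- 1 / (2 * \<beta>))"
  shows "e \<ge> 1" "real (nat \<lceil>e\<rceil>) \<ge> e" "real (nat \<lceil>e\<rceil>) \<le> 2 * e" "nat \<lceil>e\<rceil> \<ge> 1"
proof -
  have "1 powr (- 1 / (2 * \<beta>)) \<le> \<epsilon> powr (- 1 / (2 * \<beta>))"
    using e0 b0 by (intro powr_mono2') (auto simp: divide_nonpos_pos)
  then show e1: "e \<ge> 1" unfolding e_def by simp
  have ce: "real (nat \<lceil>e\<rceil>) = of_int \<lceil>e\<rceil>" using e1 by simp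
  show "real (nat \<lceil>e\<rceil>) \<ge> e" unfolding ce by (rule le_of_int_ceiling)
  show "real (nat \<lceil>e\<rceil>) \<le> 2 * e" unfolding ce using of_int_ceiling_le_add_one[of e] e1 by linarith
  show "nat \<lceil>e\<rceil> \<ge> 1" using e1 by linarith
qed

lemma sq_powr_half:
  fixes x r :: real
  assumes "x > 0"
  shows "(x powr (r / 2))\<^sup>2 = x powr r"
  using assms by (simp add: power2_eq_square powr_add[symmetric])

lemma Delta_lb:
  fixes \<epsilon> \<beta> \<alpha> :: real and K :: nat
  assumes e0: "0 < \<epsilon>" and b0: "\<beta> > 0" and a0: "\<alpha> > 0" and K1: "K \<ge> 1"
    and Ke: "real K \<le> 2 * \<epsilon> powr (- 1 / (2 * \<beta>))"
  shows "(\<alpha> * 2 powr (-(1 + \<beta>)))\<^sup>2 * \<epsilon> powr (1 + 1 / \<beta>) \<le> (\<alpha> * real K powr (-(1 + \<beta>)))\<^sup>2"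
proof -
  let ?e = "\<epsilon> powr (- 1 / (2 * \<beta>))"
  have "(2 * ?e) powr (-(1 + \<beta>)) \<le> real K powr (-(1 + \<beta>))"
    using Ke K1 b0 by (intro powr_mono2') auto
  moreover have "(2 * ?e) powr (-(1 + \<beta>)) = 2 powr (-(1 + \<beta>)) * \<epsilon> powr ((1 + 1 / \<beta>) / 2)"
  proof -
    have "(2 * ?e) powr (-(1 + \<beta>)) = 2 powr (-(1 + \<beta>)) * ?e powr (-(1 + \<beta>))"
      by (rule powr_mult)
    also have "?e powr (-(1 + \<beta>)) = \<epsilon> powr ((- 1 / (2 * \<beta>)) * (-(1 + \<beta>)))" by (rule powr_powr)
    also have "(- 1 / (2 * \<beta>)) * (-(1 + \<beta>)) = (1 + 1 / \<beta>) / 2" using b0 by (simp add: field_simps)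
    finally show ?thesis .
  qed
  ultimately have h: "\<alpha> * (2 powr (-(1 + \<beta>)) * \<epsilon> powr ((1 + 1 / \<beta>) / 2)) \<le> \<alpha> * real K powr (-(1 + \<beta>))"
    using a0 by simp
  have "(\<alpha> * (2 powr (-(1 + \<beta>)) * \<epsilon> powr ((1 + 1 / \<beta>) / 2)))\<^sup>2 \<le> (\<alpha> * real K powr (-(1 + \<beta>)))\<^sup>2"
    using h a0 by (intro power_mono) auto
  moreover have "(\<alpha> * (2 powr (-(1 + \<beta>)) * \<epsilon> powr ((1 + 1 / \<beta>) / 2)))\<^sup>2 = (\<alpha> * 2 powr (-(1 + \<beta>)))\<^sup>2 * \<epsilon> powr (1 + 1 / \<beta>)"
    using sq_powr_half[OF e0, of "1 + 1 / \<beta>"] by (simp add: power_mult_distrib)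
  ultimately show ?thesis by simp
qed

lemma err_K:
  fixes \<epsilon> \<beta> :: real and K :: nat
  assumes e0: "0 < \<epsilon>" and b0: "\<beta> > 0" and K1: "K \<ge> 1"
    and Ke: "real K \<ge> \<epsilon> powr (- 1 / (2 * \<beta>))"
  shows "(real K powr (- \<beta>))\<^sup>2 \<le> \<epsilon>"
proof -
  let ?e = "\<epsilon> powr (- 1 / (2 * \<beta>))"
  have "real K powr (- \<beta>) \<le> ?e powr (- \<beta>)"
    using Ke e0 b0 by (intro powr_mono2') auto
  also have "?e powr (- \<beta>) = \<epsilon> powr (1 / 2)"
  proof -
    have "?e powr (- \<beta>) = \<epsilon> powr ((- 1 / (2 * \<beta>)) * (- \<beta>))" by (rule powr_powr)
    also have "(- 1 / (2 * \<beta>)) * (- \<beta>) = 1 / 2" using b0 by simp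
    finally show ?thesis .
  qed
  finally have "(real K powr (- \<beta>))\<^sup>2 \<le> (\<epsilon> powr (1 / 2))\<^sup>2" by (intro power_mono) auto
  also have "\<dots> = \<epsilon>" using sq_powr_half[OF e0, of 1] e0 by simp
  finally show ?thesis .
qed

lemma N_bound:
  fixes \<epsilon> \<delta> \<beta> :: real and K :: nat
  assumes e0: "0 < \<epsilon>" "\<epsilon> < 1 / 2" and d0: "0 < \<delta>" "\<delta> < 1" and b0: "\<beta> > 0" and K1: "K \<ge> 1"
    and Ke: "real K \<le> 2 * \<epsilon> powr (- 1 / (2 * \<beta>))" and e1: "\<epsilon> powr (- 1 / (2 * \<beta>)) \<ge> 1"
  shows "real (nat \<lceil>2 * real K * (1 + 1 / \<beta>) * ln (2 * real K / \<delta>)\<rceil>)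
     \<le> (2 + 4 * (1 + 1 / \<beta>) * (7 + 1 / (2 * \<beta>))) * \<epsilon> powr (- 1 / (2 * \<beta>)) * ln (1 / (\<epsilon> * \<delta>))"
proof -
  define e where "e = \<epsilon> powr (- 1 / (2 * \<beta>))"
  define a where "a = - ln \<epsilon>"
  define b where "b = - ln \<delta>"
  define Lg where "Lg = ln (1 / (\<epsilon> * \<delta>))"
  define M where "M = 2 * real K * (1 + 1 / \<beta>)"
  have Lab: "Lg = a + b" unfolding Lg_def a_def b_def using e0 d0 by (simp add: ln_div ln_mult)
  have a1: "a \<ge> 1 / 2" unfolding a_def using ln_le_minus_one[of \<epsilon>] e0 by linarith
  have b1: "b \<ge> 0" unfolding b_def using d0 by simp
  have Lg1: "Lg \<ge> 1 / 2" using Lab a1 b1 by linarith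
  have M0: "M \<ge> 0" unfolding M_def using b0 by simp
  have KD: "2 * real K / \<delta> > 1"
  proof -
    have "2 * real K > \<delta>" using K1 d0 by linarith
    then show ?thesis using d0 by simp
  qed
  have lnK0: "ln (2 * real K / \<delta>) \<ge> 0" using KD by simp
  have lnKb: "ln (2 * real K / \<delta>) \<le> (7 + 1 / (2 * \<beta>)) * Lg"
  proof -
    have "ln (2 * real K / \<delta>) \<le> ln (4 * e / \<delta>)"
      using Ke d0 K1 e0 unfolding e_def by (subst ln_le_cancel_iff) (auto simp: divide_right_mono)
    also have "ln (4 * e / \<delta>) = ln 4 + ln e + b"
      using e1 d0 e0 unfolding e_def b_def by (simp add: ln_div ln_mult)
    also have "ln e = a / (2 * \<beta>)" unfolding e_def a_def using e0 by simp
    also have "ln (4::real) \<le> 6 * Lg" using ln_le_minus_one[of 4] Lg1 by simp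
    also have "a / (2 * \<beta>) \<le> (1 / (2 * \<beta>)) * Lg" using Lab b1 b0 by (simp add: divide_right_mono)
    also have "b \<le> Lg" using Lab a1 by linarith
    finally show ?thesis by (simp add: algebra_simps)
  qed
  have n1: "real (nat \<lceil>M * ln (2 * real K / \<delta>)\<rceil>) \<le> M * ln (2 * real K / \<delta>) + 1"
  proof -
    have "M * ln (2 * real K / \<delta>) \<ge> 0" using M0 lnK0 by simp
    then have "real (nat \<lceil>M * ln (2 * real K / \<delta>)\<rceil>) = of_int \<lceil>M * ln (2 * real K / \<delta>)\<rceil>" by simp
    then show ?thesis using of_int_ceiling_le_add_one[of "M * ln (2 * real K / \<delta>)"] by linarith
  qed
  have n2: "M * ln (2 * real K / \<delta>) \<le> (4 * e * (1 + 1 / \<beta>)) * ((7 + 1 / (2 * \<beta>)) * Lg)"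
  proof (rule mult_mono[OF _ lnKb _ lnK0])
    show "M \<le> 4 * e * (1 + 1 / \<beta>)" unfolding M_def using Ke b0 unfolding e_def
      by (simp add: mult_right_mono)
    show "0 \<le> 4 * e * (1 + 1 / \<beta>)" using e1 b0 unfolding e_def by simp
  qed
  have n3: "(1::real) \<le> 2 * e * Lg"
  proof -
    have "1 * 1 \<le> e * (2 * Lg)" using e1 Lg1 unfolding e_def by (intro mult_mono) auto
    then show ?thesis by simp
  qed
  have eq: "(4 * e * (1 + 1 / \<beta>)) * ((7 + 1 / (2 * \<beta>)) * Lg) + 2 * e * Lg
      = (2 + 4 * (1 + 1 / \<beta>) * (7 + 1 / (2 * \<beta>))) * e * Lg"
    by (simp add: algebra_simps)
  have "real (nat \<lceil>M * ln (2 * real K / \<delta>)\<rceil>) \<le> (2 + 4 * (1 + 1 / \<beta>) * (7 + 1 / (2 * \<beta>))) * e * Lg"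
    using n1 n2 n3 eq by linarith
  then show ?thesis unfolding M_def e_def Lg_def .
qed



theorem theorem5:
  fixes P :: nat and g :: "nat \<Rightarrow> real" and lam \<alpha> \<beta> :: real
  assumes "prime P"
    and "(\<Sum>b<P. g b) = 0"
    and "(\<Sum>b<P. (g b)\<^sup>2) = 1"
    and "lam > 0" and "\<alpha> > 0" and "\<beta> > 0"
  shows "\<exists>cD > 0. \<exists>cN > 0. \<exists>cE > 0. \<forall>\<epsilon> \<delta>. 0 < \<epsilon> \<and> \<epsilon> < 1 \<and> 0 < \<delta> \<and> \<delta> < 1 \<longrightarrow>
    (\<exists>\<Delta> > 0. \<exists>N :: nat.
       \<Delta> \<ge> cD * \<epsilon> powr (1 + 1 / \<beta>)
     \<and> real N \<le> cN * \<epsilon> powr (- 1 / (2 * \<beta>)) * ln (1 / (\<epsilon> * \<delta>))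
     \<and> (\<forall>(F :: nat \<Rightarrow> (nat \<Rightarrow> nat) \<Rightarrow> real) (X :: nat \<Rightarrow> (nat \<Rightarrow> nat) list)
          (Wst :: nat \<Rightarrow> (nat \<Rightarrow> nat) \<times> nat \<Rightarrow> real).
          (\<forall>D\<ge>1. X D \<noteq> [] \<and> set (X D) \<subseteq> vecs P D
                  \<and> is_wstar P D g lam (X D) (F D) (Wst D)
                  \<and> ab_class P D \<alpha> \<beta> (Wst D))
          \<longrightarrow> (\<forall>D\<ge>1.
                sample_prob P D \<Delta> (Wst D) N
                  (\<lambda>W. card W \<le> N \<and>
                     (\<forall>v. is_trained P D g lam (X D) (F D) W v \<longrightarrow>
                        (\<Sum>x\<in>vecs P D. phat (X D) x *
                           (netS P D g (Wst D) x - subnet P D g W v x)\<^sup>2) \<le> cE * \<epsilon>))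
                > 1 - \<delta>)))"
proof -
  have P0: "P > 0" using assms(1) prime_gt_0_nat by blast
  note g2 = assms(3) and lam = assms(4) and a0 = assms(5) and b0 = assms(6)
  define C1 where "C1 = \<alpha> * (1 + 1 / \<beta>)"
  define cD where "cD = (\<alpha> * 2 powr (-(1 + \<beta>)))\<^sup>2"
  define cN where "cN = 2 + 4 * (1 + 1 / \<beta>) * (7 + 1 / (2 * \<beta>))"
  define cE where "cE = 2 * (1 + lam) * C1\<^sup>2"
  have C1p: "C1 > 0" unfolding C1_def using a0 b0 by (simp add: add_pos_pos)
  have cDp: "cD > 0" unfolding cD_def using a0 by simp
  have cNp: "cN > 0" unfolding cN_def using b0 by (simp add: add_pos_pos)
  have cEp: "cE > 0" unfolding cE_def using lam C1p by simp
  have main: "\<exists>\<Delta> > 0. \<exists>N :: nat.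
       \<Delta> \<ge> cD * \<epsilon> powr (1 + 1 / \<beta>)
     \<and> real N \<le> cN * \<epsilon> powr (- 1 / (2 * \<beta>)) * ln (1 / (\<epsilon> * \<delta>))
     \<and> (\<forall>(F :: nat \<Rightarrow> (nat \<Rightarrow> nat) \<Rightarrow> real) (X :: nat \<Rightarrow> (nat \<Rightarrow> nat) list)
          (Wst :: nat \<Rightarrow> (nat \<Rightarrow> nat) \<times> nat \<Rightarrow> real).
          (\<forall>D\<ge>1. X D \<noteq> [] \<and> set (X D) \<subseteq> vecs P D
                  \<and> is_wstar P D g lam (X D) (F D) (Wst D)
                  \<and> ab_class P D \<alpha> \<beta> (Wst D))
          \<longrightarrow> (\<forall>D\<ge>1.
                sample_prob P D \<Delta> (Wst D) N
                  (\<lambda>W. card W \<le> N \<and>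
                     (\<forall>v. is_trained P D g lam (X D) (F D) W v \<longrightarrow>
                        (\<Sum>x\<in>vecs P D. phat (X D) x *
                           (netS P D g (Wst D) x - subnet P D g W v x)\<^sup>2) \<le> cE * \<epsilon>))
                > 1 - \<delta>))"
    if e0: "0 < \<epsilon>" "\<epsilon> < 1" and d0: "0 < \<delta>" "\<delta> < 1" for \<epsilon> \<delta>
  proof -
    have Lg0: "ln (1 / (\<epsilon> * \<delta>)) > 0"
    proof -
      have "\<epsilon> * \<delta> < 1 * 1" using e0 d0 by (intro mult_strict_mono) auto
      then show ?thesis using e0 d0 by simp
    qed
    have epos: "\<epsilon> powr (- 1 / (2 * \<beta>)) > 0" using e0 by simp
    show ?thesis
    proof (cases "\<epsilon> \<ge> 1 / 2")
      case True
      show ?thesis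
      proof (rule exI[of _ cD], rule conjI[OF cDp], rule exI[of _ 0], intro conjI)
        have "\<epsilon> powr (1 + 1 / \<beta>) \<le> 1" using e0 b0 by (intro powr_le1) auto
        then show "cD * \<epsilon> powr (1 + 1 / \<beta>) \<le> cD" using cDp by (simp add: mult_left_le)
        show "real 0 \<le> cN * \<epsilon> powr (- 1 / (2 * \<beta>)) * ln (1 / (\<epsilon> * \<delta>))"
          using cNp epos Lg0 by simp
        show "\<forall>(F :: nat \<Rightarrow> (nat \<Rightarrow> nat) \<Rightarrow> real) (X :: nat \<Rightarrow> (nat \<Rightarrow> nat) list)
          (Wst :: nat \<Rightarrow> (nat \<Rightarrow> nat) \<times> nat \<Rightarrow> real).
          (\<forall>D\<ge>1. X D \<noteq> [] \<and> set (X D) \<subseteq> vecs P D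
                  \<and> is_wstar P D g lam (X D) (F D) (Wst D)
                  \<and> ab_class P D \<alpha> \<beta> (Wst D))
          \<longrightarrow> (\<forall>D\<ge>1.
                sample_prob P D cD (Wst D) 0
                  (\<lambda>W. card W \<le> 0 \<and>
                     (\<forall>v. is_trained P D g lam (X D) (F D) W v \<longrightarrow>
                        (\<Sum>x\<in>vecs P D. phat (X D) x *
                           (netS P D g (Wst D) x - subnet P D g W v x)\<^sup>2) \<le> cE * \<epsilon>))
                > 1 - \<delta>)"
        proof (intro allI impI)
          fix F :: "nat \<Rightarrow> (nat \<Rightarrow> nat) \<Rightarrow> real" and X :: "nat \<Rightarrow> (nat \<Rightarrow> nat) list"
            and Wst :: "nat \<Rightarrow> (nat \<Rightarrow> nat) \<times> nat \<Rightarrow> real" and D :: nat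
          assume H: "\<forall>D\<ge>1. X D \<noteq> [] \<and> set (X D) \<subseteq> vecs P D
                  \<and> is_wstar P D g lam (X D) (F D) (Wst D)
                  \<and> ab_class P D \<alpha> \<beta> (Wst D)" and D1: "D \<ge> 1"
          have wst: "is_wstar P D g lam (X D) (F D) (Wst D)" and abc: "ab_class P D \<alpha> \<beta> (Wst D)"
            using H D1 by auto
          have Bb: "(1 + lam) * (\<alpha> * (1 + 1 / \<beta>))\<^sup>2 \<le> cE * \<epsilon>"
          proof -
            have "(1 + lam) * C1\<^sup>2 * 1 \<le> (1 + lam) * C1\<^sup>2 * (2 * \<epsilon>)"
              using True lam by (intro mult_left_mono) auto
            then show ?thesis unfolding cE_def C1_def by (simp add: algebra_simps)
          qed
          have "sample_prob P D cD (Wst D) 0 (evt P D g lam (X D) (F D) (Wst D) 0 (cE * \<epsilon>)) \<ge> 1"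
            by (rule allD[OF P0 g2 lam a0 b0 cDp wst abc Bb])
          then show "sample_prob P D cD (Wst D) 0 (evt P D g lam (X D) (F D) (Wst D) 0 (cE * \<epsilon>)) > 1 - \<delta>"
            using d0 by linarith
        qed
      qed
    next
      case False
      then have eh: "\<epsilon> < 1 / 2" by simp
      define e where "e = \<epsilon> powr (- 1 / (2 * \<beta>))"
      define K where "K = nat \<lceil>e\<rceil>"
      note ek = eK_facts[OF e0 b0, folded e_def, folded K_def]
      define M where "M = 2 * real K * (1 + 1 / \<beta>)"
      define N where "N = nat \<lceil>M * ln (2 * real K / \<delta>)\<rceil>"
      define \<Delta> where "\<Delta> = (\<alpha> * real K powr (-(1 + \<beta>)))\<^sup>2"
      have K1: "K \<ge> 1" using ek(4) .
      have Dp: "\<Delta> > 0" unfolding \<Delta>_def using a0 K1 by simp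
      have M0: "M > 0" unfolding M_def using K1 b0 by (simp add: add_pos_pos)
      have KD: "2 * real K / \<delta> > 0" using K1 d0 by simp
      show ?thesis
      proof (rule exI[of _ \<Delta>], rule conjI[OF Dp], rule exI[of _ N], intro conjI)
        show "cD * \<epsilon> powr (1 + 1 / \<beta>) \<le> \<Delta>"
          unfolding cD_def \<Delta>_def using Delta_lb[OF e0(1) b0 a0 K1] ek(3) unfolding e_def by simp
        show "real N \<le> cN * \<epsilon> powr (- 1 / (2 * \<beta>)) * ln (1 / (\<epsilon> * \<delta>))"
          unfolding N_def M_def cN_def using N_bound[OF e0(1) eh d0 b0 K1] ek(3) ek(1) unfolding e_def by simp
        have expb: "real K * exp (- real N / (2 * real K * (1 + 1 / \<beta>))) \<le> \<delta> / 2"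
        proof -
          have "real N \<ge> M * ln (2 * real K / \<delta>)" unfolding N_def
            by (rule real_nat_ceiling_ge)
          then have "real N / M \<ge> ln (2 * real K / \<delta>)" using M0 by (simp add: field_simps)
          then have "exp (- real N / M) \<le> exp (- ln (2 * real K / \<delta>))" by simp
          also have "exp (- ln (2 * real K / \<delta>)) = \<delta> / (2 * real K)"
            using KD by (simp add: exp_minus)
          finally have "real K * exp (- real N / M) \<le> real K * (\<delta> / (2 * real K))"
            by (intro mult_left_mono) auto
          also have "\<dots> = \<delta> / 2" using K1 by simp
          finally show ?thesis unfolding M_def .
        qed
        show "\<forall>(F :: nat \<Rightarrow> (nat \<Rightarrow> nat) \<Rightarrow> real) (X :: nat \<Rightarrow> (nat \<Rightarrow> nat) list)
          (Wst :: nat \<Rightarrow> (nat \<Rightarrow> nat) \<times> nat \<Rightarrow> real).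
          (\<forall>D\<ge>1. X D \<noteq> [] \<and> set (X D) \<subseteq> vecs P D
                  \<and> is_wstar P D g lam (X D) (F D) (Wst D)
                  \<and> ab_class P D \<alpha> \<beta> (Wst D))
          \<longrightarrow> (\<forall>D\<ge>1.
                sample_prob P D \<Delta> (Wst D) N
                  (\<lambda>W. card W \<le> N \<and>
                     (\<forall>v. is_trained P D g lam (X D) (F D) W v \<longrightarrow>
                        (\<Sum>x\<in>vecs P D. phat (X D) x *
                           (netS P D g (Wst D) x - subnet P D g W v x)\<^sup>2) \<le> cE * \<epsilon>))
                > 1 - \<delta>)"
        proof (intro allI impI)
          fix F :: "nat \<Rightarrow> (nat \<Rightarrow> nat) \<Rightarrow> real" and X :: "nat \<Rightarrow> (nat \<Rightarrow> nat) list"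
            and Wst :: "nat \<Rightarrow> (nat \<Rightarrow> nat) \<times> nat \<Rightarrow> real" and D :: nat
          assume H: "\<forall>D\<ge>1. X D \<noteq> [] \<and> set (X D) \<subseteq> vecs P D
                  \<and> is_wstar P D g lam (X D) (F D) (Wst D)
                  \<and> ab_class P D \<alpha> \<beta> (Wst D)" and D1: "D \<ge> 1"
          have wst: "is_wstar P D g lam (X D) (F D) (Wst D)" and abc: "ab_class P D \<alpha> \<beta> (Wst D)"
            using H D1 by auto
          have Bb: "(1 + lam) * (\<alpha> * (1 + 1 / \<beta>) * real K powr (- \<beta>))\<^sup>2 \<le> cE * \<epsilon>"
          proof -
            have ke: "(real K powr (- \<beta>))\<^sup>2 \<le> \<epsilon>"
              using err_K[OF e0(1) b0 K1] ek(2) unfolding e_def by simp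
            have "(1 + lam) * (\<alpha> * (1 + 1 / \<beta>) * real K powr (- \<beta>))\<^sup>2 = ((1 + lam) * C1\<^sup>2) * (real K powr (- \<beta>))\<^sup>2"
              unfolding C1_def by (simp add: power_mult_distrib)
            also have "\<dots> \<le> ((1 + lam) * C1\<^sup>2) * \<epsilon>"
              using ke lam by (intro mult_left_mono) auto
            also have "\<dots> \<le> cE * \<epsilon>" unfolding cE_def using e0 lam by (simp add: mult_right_mono)
            finally show ?thesis .
          qed
          have "sample_prob P D \<Delta> (Wst D) N (evt P D g lam (X D) (F D) (Wst D) N (cE * \<epsilon>))
             \<ge> 1 - real K * exp (- real N / (2 * real K * (1 + 1 / \<beta>)))"
            unfolding \<Delta>_def by (rule mainD[OF P0 g2 lam a0 b0 wst abc K1 Bb])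
          then show "sample_prob P D \<Delta> (Wst D) N (evt P D g lam (X D) (F D) (Wst D) N (cE * \<epsilon>)) > 1 - \<delta>"
            using expb d0 by linarith
        qed
      qed
    qed
  qed
  show ?thesis
    apply (rule exI[of _ cD], rule conjI[OF cDp])
    apply (rule exI[of _ cN], rule conjI[OF cNp])
    apply (rule exI[of _ cE], rule conjI[OF cEp])
    using main by blast
qed


end
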